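(* Let $1\le i<s\le t$ and let $\mathcal H$ be an $s$-graph on $n$ vertices with $\Delta_i(\mathcal H)\le\Delta$. (a) If $\Delta$ is a nonnegative integer with $(s-i)$-cascade representation $\Delta=\sum_{k=0}^{\ell-1}\binom{n_{s-i-k}}{s-i-k}$, then \[k^t(\mathcal H)\le\binom{n}{i}\frac{1}{\binom{t}{i}}\sum_{k=0}^{\ell-1}\binom{n_{s-i-k}}{t-i-k}.\] (b) If $\Delta=\binom{x-i}{s-i}$ for some real $x\ge s$, then $k^t(\mathcal H)=0$ when $s\le x<t$, and when $x\ge t$, \[k^t(\mathcal H)\le\binom{n}{i}\frac{\binom{x-i}{t-i}}{\binom{t}{i}}=\binom{n}{i}\frac{\binom{x}{t}}{\binom{x}{i}}.\]
   Context: An $s$-graph on vertex set $V$ is a family of $s$-subsets of $V$. For $|I|=i$, $d_{\mathcal H}(I)$ is the number of edges containing $I$ and $\Delta_i(\mathcal H)=\max_{|I|=i}d_{\mathcal H}(I)$. For $t\ge s$, a $t$-clique is a $t$-set all of whose $s$-subsets are edges; $k^t(\mathcal H)$ is the number of $t$-cliques. A strict $q$-cascade is an integer sequence $n_q>n_{q-1}>\dots>n_{q-\ell+1}$ with $0\le\ell\le q$ and $n_{q-k}\ge q-k$ for all $k$; every integer $m\ge0$ can be written uniquely as $m=\sum_{k=0}^{\ell-1}\binom{n_{q-k}}{q-k}$ with a strict $q$-cascade (the $q$-cascade representation; $\ell=0$ for $m=0$). For real $x$, $\binom{x}{k}=x(x-1)\cdots(x-k+1)/k!$. *)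

theory Defs
  imports Complex_Main
begin

definition is_sgraph :: "'a set \<Rightarrow> nat \<Rightarrow> 'a set set \<Rightarrow> bool" where
  "is_sgraph V s H \<longleftrightarrow> finite V \<and> (\<forall>e\<in>H. e \<subseteq> V \<and> card e = s)"

definition deg :: "'a set set \<Rightarrow> 'a set \<Rightarrow> nat" where
  "deg H I = card {e \<in> H. I \<subseteq> e}"

definition max_deg :: "'a set \<Rightarrow> 'a set set \<Rightarrow> nat \<Rightarrow> nat" where
  "max_deg V H i = Max (insert 0 {deg H I | I. I \<subseteq> V \<and> card I = i})"

definition cliques :: "'a set \<Rightarrow> nat \<Rightarrow> 'a set set \<Rightarrow> nat \<Rightarrow> 'a set set" where
  "cliques V s H t = {T. T \<subseteq> V \<and> card T = t \<and> (\<forall>S. S \<subseteq> T \<and> card S = s \<longrightarrow> S \<in> H)}"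

definition num_cliques :: "'a set \<Rightarrow> nat \<Rightarrow> 'a set set \<Rightarrow> nat \<Rightarrow> nat" where
  "num_cliques V s H t = card (cliques V s H t)"

text \<open>A strict q-cascade, as the list [n_q, n_{q-1}, ..., n_{q-l+1}]:
  entry k is n_{q-k}.\<close>
definition strict_cascade :: "nat \<Rightarrow> nat list \<Rightarrow> bool" where
  "strict_cascade q ns \<longleftrightarrow> length ns \<le> q \<and> sorted_wrt (>) ns \<and>
     (\<forall>k < length ns. ns ! k \<ge> q - k)"

definition cascade_value :: "nat \<Rightarrow> nat list \<Rightarrow> nat" where
  "cascade_value q ns = (\<Sum>k < length ns. (ns ! k) choose (q - k))"

end

theory Submission
  imports Defs
begin

fun CV :: "nat \<Rightarrow> nat list \<Rightarrow> nat" where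
  "CV k [] = 0"
| "CV k (x#xs) = (x choose k) + CV (k-1) xs"

fun cc :: "nat \<Rightarrow> nat list \<Rightarrow> bool" where
  "cc k [] = True"
| "cc k (x#xs) = (0 < k \<and> k \<le> x \<and> (\<forall>y\<in>set xs. y < x) \<and> cc (k-1) xs)"

abbreviation dec :: "nat list \<Rightarrow> nat list" where
  "dec a \<equiv> map (\<lambda>x. x - 1) a"

lemma cc_len: "cc k a \<Longrightarrow> length a \<le> k"
proof (induction a arbitrary: k)
  case (Cons x xs)
  have h: "length xs \<le> k-1" using Cons by auto
  have "0 < k" using Cons.prems by simp
  from h this show ?case by simp
qed simp

lemma cc_sorted: "cc k a \<Longrightarrow> sorted_wrt (>) a"
  by (induction a arbitrary: k) auto

lemma cc_pos: "cc k a \<Longrightarrow> y \<in> set a \<Longrightarrow> 1 \<le> y"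
  by (induction a arbitrary: k) auto

lemma P1: "cc k a \<Longrightarrow> CV k a = CV k (dec a) + CV (k-1) (dec a)"
proof (induction a arbitrary: k)
  case Nil then show ?case by simp
next
  case (Cons x xs)
  then have "x choose k = (x-1 choose k) + (x-1 choose (k-1))"
    using choose_reduce_nat[of x k] by auto
  with Cons show ?case by simp
qed


lemma P2: "cc k a \<Longrightarrow> 1 \<le> k \<Longrightarrow> CV (k-1) a = CV (k-1) (dec a) + CV (k-2) (take (k-1) (dec a))"
proof (induction a arbitrary: k)
  case Nil then show ?case by simp
next
  case (Cons x xs)
  show ?case
  proof (cases "k = 1")
    case True
    with Cons have "xs = []" using cc_len[of "k-1" xs] by auto
    with True show ?thesis by simp
  next
    case False
    with Cons.prems have k2: "k \<ge> 2" by auto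
    have "x choose (k-1) = (x-1 choose (k-1)) + (x-1 choose (k-2))"
      using choose_reduce_nat[of x "k-1"] Cons.prems k2 by (auto simp: numeral_2_eq_2)
    moreover have "CV (k-2) xs = CV (k-2) (dec xs) + CV (k-3) (take (k-2) (dec xs))"
      using Cons.IH[of "k-1"] Cons.prems k2 by (auto simp: numeral_2_eq_2 numeral_3_eq_3)
    moreover have "take (k-1) (dec (x#xs)) = (x-1) # take (k-2) (dec xs)"
      using k2 by (cases k) (auto simp: numeral_2_eq_2 take_Cons')
    ultimately show ?thesis using k2
      by (cases k; cases "k-1"; simp add: numeral_2_eq_2 numeral_3_eq_3)
  qed
qed

lemma P3: "cc k a \<Longrightarrow> cc (k-1) (take (k-1) (dec a))"
proof (induction a arbitrary: k)
  case Nil then show ?case by simp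
next
  case (Cons x xs)
  show ?case
  proof (cases "k = 1")
    case True then show ?thesis by simp
  next
    case False
    with Cons.prems have k2: "k \<ge> 2" by auto
    have pos: "\<forall>y\<in>set xs. 1 \<le> y" using Cons.prems cc_pos[of "k-1" xs] by auto
    have "take (k-1) (dec (x#xs)) = (x-1) # take (k-2) (dec xs)"
      using k2 by (cases k) (auto simp: numeral_2_eq_2 take_Cons')
    moreover have "\<forall>y\<in>set (take (k-2) (dec xs)). y < x - 1"
    proof
      fix y assume "y \<in> set (take (k-2) (dec xs))"
      then obtain w where w: "w \<in> set xs" "y = w - 1" by (auto dest!: in_set_takeD)
      then have "1 \<le> w" "w < x" using pos Cons.prems by auto
      with w show "y < x - 1" by simp
    qed
    moreover have "cc (k-2) (take (k-2) (dec xs))"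
      using Cons.IH[of "k-1"] Cons.prems by (simp add: numeral_2_eq_2)
    moreover have "k - 1 \<le> x - 1" using Cons.prems diff_le_mono by auto
    ultimately show ?thesis using k2 Cons.prems by (simp add: numeral_2_eq_2)
  qed
qed

lemma P4: "CV k (take n xs) \<le> CV k xs"
  by (induction xs arbitrary: k n) (auto simp: take_Cons' )

lemma choose_pred: "1 \<le> k \<Longrightarrow> k choose (k-1) = k"
  using binomial_symmetric[of "k-1" k] by simp

fun bb :: "nat \<Rightarrow> nat list \<Rightarrow> nat list" where
  "bb k [] = []"
| "bb k (x#xs) = (if x = k then [k] else (x-1) # bb (k-1) xs)"

lemma bb_set: "y \<in> set (bb k xs) \<Longrightarrow> y \<le> k \<or> (\<exists>w\<in>set xs. y = w - 1)"
proof (induction xs arbitrary: k)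
  case (Cons x xs)
  show ?case
  proof (cases "x = k")
    case True with Cons.prems show ?thesis by simp
  next
    case False
    with Cons.prems have "y = x - 1 \<or> y \<in> set (bb (k-1) xs)" by simp
    then show ?thesis using Cons.IH[of "k-1"] by auto
  qed
qed simp

lemma B1: "cc k a \<Longrightarrow> cc k (bb k a)"
proof (induction a arbitrary: k)
  case Nil then show ?case by simp
next
  case (Cons x xs)
  have pos: "\<forall>y\<in>set xs. 1 \<le> y" using Cons.prems cc_pos[of "k-1" xs] by auto
  show ?case
  proof (cases "x = k")
    case True with Cons.prems show ?thesis by simp
  next
    case False
    have "\<forall>y\<in>set (bb (k-1) xs). y < x - 1"
    proof
      fix y assume "y \<in> set (bb (k-1) xs)"
      from bb_set[OF this] show "y < x - 1" using Cons.prems False pos by auto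
    qed
    with Cons False show ?thesis by auto
  qed
qed

lemma B2: "cc k a \<Longrightarrow> CV k (bb k a) \<le> CV k (dec a) + 1"
  by (induction a arbitrary: k) auto

lemma Mlem: "cc m xs \<Longrightarrow> \<forall>y\<in>set xs. y \<le> m \<Longrightarrow> CV (m-1) (dec xs) \<le> m"
proof (induction xs arbitrary: m)
  case Nil then show ?case by simp
next
  case (Cons y ys)
  then have "y = m" by auto
  have "CV (m-2) (dec ys) \<le> m - 1"
    using Cons.IH[of "m-1"] Cons.prems \<open>y = m\<close> by (force simp: numeral_2_eq_2)
  moreover have "CV (m-1) (dec (y#ys)) = 1 + CV (m-2) (dec ys)"
    using \<open>y = m\<close> by (simp add: numeral_2_eq_2)
  ultimately show ?case using Cons.prems \<open>y = m\<close> by (simp add: numeral_2_eq_2; linarith)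
qed

lemma B3: "cc k a \<Longrightarrow> CV (k-1) (dec a) \<le> CV (k-1) (bb k a)"
proof (induction a arbitrary: k)
  case Nil then show ?case by simp
next
  case (Cons x xs)
  show ?case
  proof (cases "x = k")
    case True
    have "CV (k-2) (dec xs) \<le> k - 1"
      using Mlem[of "k-1" xs] Cons.prems True by (force simp: numeral_2_eq_2)
    moreover have "k choose (k-1) = k" using Cons.prems True choose_pred[of k] by simp
    moreover have "CV (k-1) (dec (x#xs)) = 1 + CV (k-2) (dec xs)"
      using True by (simp add: numeral_2_eq_2)
    moreover have "CV (k-1) (bb k (x#xs)) = k" using True \<open>k choose (k-1) = k\<close> by simp
    ultimately show ?thesis using Cons.prems True by (simp add: numeral_2_eq_2; linarith)
  next
    case False
    have "CV (k-1-1) (dec xs) \<le> CV (k-1-1) (bb (k-1) xs)" using Cons.IH[of "k-1"] Cons.prems by simp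
    with False show ?thesis by (simp add: numeral_2_eq_2)
  qed
qed

fun ext :: "nat \<Rightarrow> nat list \<Rightarrow> nat list" where
  "ext k [] = [k]"
| "ext k (x#xs) = (if x < k then [k] else x # ext (k-1) xs)"

lemma ext_set: "y \<in> set (ext k xs) \<Longrightarrow> y \<le> k \<or> y \<in> set xs"
proof (induction xs arbitrary: k)
  case (Cons x xs)
  show ?case
  proof (cases "x < k")
    case True with Cons.prems show ?thesis by simp
  next
    case False
    with Cons.prems have "y = x \<or> y \<in> set (ext (k-1) xs)" by simp
    then show ?thesis using Cons.IH[of "k-1"] by auto
  qed
qed simp

lemma E1: "sorted_wrt (>) a \<Longrightarrow> length a < k \<Longrightarrow> cc k (ext k a)"
proof (induction a arbitrary: k)
  case Nil then show ?case by simp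
next
  case (Cons x xs)
  show ?case
  proof (cases "x < k")
    case True with Cons.prems show ?thesis by simp
  next
    case False
    have "\<forall>y\<in>set (ext (k-1) xs). y < x"
    proof
      fix y assume "y \<in> set (ext (k-1) xs)"
      from ext_set[OF this] show "y < x" using Cons.prems False by auto
    qed
    with Cons False show ?thesis by auto
  qed
qed

lemma E2: "CV k (ext k a) \<le> CV k a + 1"
  by (induction a arbitrary: k) auto

lemma Tlem: "sorted_wrt (>) a \<Longrightarrow> \<forall>y\<in>set a. y \<le> m \<Longrightarrow> CV m a \<le> length a"
proof (induction a arbitrary: m)
  case Nil then show ?case by simp
next
  case (Cons y ys)
  have "y choose m \<le> 1"
    using Cons.prems by (cases "y = m") (auto simp: binomial_eq_0)
  moreover have "\<forall>w\<in>set ys. w \<le> m - 1" using Cons.prems by fastforce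
  then have "CV (m-1) ys \<le> length ys" using Cons.IH[of "m-1"] Cons.prems by simp
  ultimately show ?case by simp
qed

lemma E3: "sorted_wrt (>) a \<Longrightarrow> length a < k \<Longrightarrow> CV (k-1) a < CV (k-1) (ext k a)"
proof (induction a arbitrary: k)
  case Nil
  then have "k choose (k-1) = k" using choose_pred[of k] by simp
  with Nil show ?case by simp
next
  case (Cons x xs)
  show ?case
  proof (cases "x < k")
    case True
    have kk: "k choose (k-1) = k" using Cons.prems choose_pred[of k] by simp
    have "CV (k-1) (x#xs) \<le> length (x#xs)"
      using Tlem[of "x#xs" "k-1"] Cons.prems True by force
    with kk Cons.prems True show ?thesis by simp
  next
    case False
    have "CV (k-1-1) xs < CV (k-1-1) (ext (k-1) xs)" using Cons.IH[of "k-1"] Cons.prems by simp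
    with False show ?thesis by (simp add: numeral_2_eq_2)
  qed
qed


definition shadow :: "'a set set \<Rightarrow> 'a set set" where
  "shadow F = {A - {x} | A x. A \<in> F \<and> x \<in> A}"

definition sh :: "'a \<Rightarrow> 'a \<Rightarrow> 'a set \<Rightarrow> 'a set" where
  "sh z x A = (if x \<in> A \<and> z \<notin> A then insert z (A - {x}) else A)"

definition SF :: "'a \<Rightarrow> 'a \<Rightarrow> 'a set set \<Rightarrow> 'a set set" where
  "SF z x F = {A \<in> F. sh z x A \<in> F} \<union> {sh z x A | A. A \<in> F \<and> sh z x A \<notin> F}"

abbreviation subs :: "'a set \<Rightarrow> nat \<Rightarrow> 'a set set" where
  "subs X q \<equiv> {A. A \<subseteq> X \<and> card A = q}"

lemma shadow_mem: "A \<in> F \<Longrightarrow> x \<in> A \<Longrightarrow> A - {x} \<in> shadow F"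
  unfolding shadow_def by blast

lemma shadow_memE: "B \<in> shadow F \<Longrightarrow> (\<And>A x. A \<in> F \<Longrightarrow> x \<in> A \<Longrightarrow> B = A - {x} \<Longrightarrow> P) \<Longrightarrow> P"
  unfolding shadow_def by blast

lemma finite_shadow: "finite F \<Longrightarrow> \<forall>A\<in>F. finite A \<Longrightarrow> finite (shadow F)"
proof -
  assume "finite F" "\<forall>A\<in>F. finite A"
  moreover have "shadow F = (\<Union>A\<in>F. (\<lambda>x. A - {x}) ` A)" unfolding shadow_def by blast
  ultimately show ?thesis by simp
qed

lemma finite_subs: "finite X \<Longrightarrow> F \<subseteq> subs X q \<Longrightarrow> finite F"
  by (rule finite_subset[of _ "Pow X"]) auto

lemma finite_shadow_subs: "finite X \<Longrightarrow> F \<subseteq> subs X q \<Longrightarrow> finite (shadow F)"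
  by (rule finite_shadow) (auto intro: finite_subs finite_subset)

lemma shadow_subs: "finite X \<Longrightarrow> F \<subseteq> subs X q \<Longrightarrow> shadow F \<subseteq> subs X (q-1)"
  unfolding shadow_def by (auto dest: finite_subset)

lemma SF_img: "SF z x F = (\<lambda>A. if sh z x A \<in> F then A else sh z x A) ` F"
  unfolding SF_def by auto

lemma sh_inj: "x \<in> A \<Longrightarrow> z \<notin> A \<Longrightarrow> x \<in> B \<Longrightarrow> z \<notin> B \<Longrightarrow> insert z (A - {x}) = insert z (B - {x}) \<Longrightarrow> A = B"
proof -
  assume a: "x \<in> A" "z \<notin> A" "x \<in> B" "z \<notin> B" "insert z (A - {x}) = insert z (B - {x})"
  have "A - {x} = B - {x}"
  proof
    show "A - {x} \<subseteq> B - {x}" using a by (metis Diff_iff insertCI insertE subsetI)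
    show "B - {x} \<subseteq> A - {x}" using a by (metis Diff_iff insertCI insertE subsetI)
  qed
  then show "A = B" using a by (metis insert_Diff)
qed

lemma SF_card: "finite F \<Longrightarrow> card (SF z x F) = card F"
proof -
  assume fin: "finite F"
  have "inj_on (\<lambda>A. if sh z x A \<in> F then A else sh z x A) F"
  proof (rule inj_onI)
    fix A B assume A: "A \<in> F" and B: "B \<in> F"
      and eq: "(if sh z x A \<in> F then A else sh z x A) = (if sh z x B \<in> F then B else sh z x B)"
    show "A = B"
    proof (cases "sh z x A \<in> F"; cases "sh z x B \<in> F")
      assume "sh z x A \<in> F" "sh z x B \<in> F" then show ?thesis using eq by simp
    next
      assume "sh z x A \<in> F" "sh z x B \<notin> F" then show ?thesis using eq A by simp
    next
      assume "sh z x A \<notin> F" "sh z x B \<in> F" then show ?thesis using eq B by simp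
    next
      assume a: "sh z x A \<notin> F" "sh z x B \<notin> F"
      then have "sh z x A \<noteq> A" "sh z x B \<noteq> B" using A B by auto
      then have "x \<in> A" "z \<notin> A" "x \<in> B" "z \<notin> B" unfolding sh_def by (auto split: if_splits)
      moreover have "insert z (A - {x}) = insert z (B - {x})" using eq a calculation by (simp add: sh_def)
      ultimately show ?thesis by (rule sh_inj)
    qed
  qed
  then show ?thesis unfolding SF_img by (rule card_image)
qed

lemma SF_in1: "A \<in> F \<Longrightarrow> sh z x A \<in> F \<Longrightarrow> A \<in> SF z x F"
  unfolding SF_def by simp

lemma SF_in2: "D \<in> F \<Longrightarrow> sh z x D \<notin> F \<Longrightarrow> sh z x D \<in> SF z x F"
  unfolding SF_def by blast

lemma SF_E: "A \<in> SF z x F \<Longrightarrow> (A \<in> F \<Longrightarrow> sh z x A \<in> F \<Longrightarrow> P) \<Longrightarrow>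
   (\<And>D. D \<in> F \<Longrightarrow> sh z x D \<notin> F \<Longrightarrow> A = sh z x D \<Longrightarrow> P) \<Longrightarrow> P"
  unfolding SF_def by blast

lemma shadow_SF: "shadow (SF z x F) \<subseteq> SF z x (shadow F)"
proof
  fix B assume "B \<in> shadow (SF z x F)"
  then obtain C y where C: "C \<in> SF z x F" "y \<in> C" "B = C - {y}" by (rule shadow_memE)
  from C(1) show "B \<in> SF z x (shadow F)"
  proof (rule SF_E)
    assume CF: "C \<in> F" and shC: "sh z x C \<in> F"
    have BF: "B \<in> shadow F" using shadow_mem[OF CF C(2)] C(3) by simp
    show ?thesis
    proof (cases "sh z x B \<in> shadow F")
      case True with BF show ?thesis by (rule SF_in1)
    next
      case False
      then have nB: "sh z x B \<noteq> B" using BF by auto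
      then have xB: "x \<in> B" "z \<notin> B" unfolding sh_def by (auto split: if_splits)
      have "sh z x B \<in> shadow F"
      proof (cases "z \<in> C")
        case False
        then have e1: "sh z x C = insert z (C - {x})" using xB C unfolding sh_def by auto
        have yz: "y \<noteq> z" using C False by auto
        have "y \<in> insert z (C - {x})" using C xB by auto
        then have "insert z (C - {x}) - {y} \<in> shadow F" using shadow_mem[OF shC] e1 by simp
        moreover have "insert z (C - {x}) - {y} = sh z x B" using xB C yz unfolding sh_def by auto
        ultimately show ?thesis by simp
      next
        case True
        then have "y = z" using xB C by auto
        have "x \<in> C" using xB C by auto
        have "C - {x} \<in> shadow F" using shadow_mem[OF CF \<open>x \<in> C\<close>] .
        moreover have "C - {x} = sh z x B" using xB C \<open>y = z\<close> True unfolding sh_def by auto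
        ultimately show ?thesis by simp
      qed
      with False show ?thesis by simp
    qed
  next
    fix D assume D: "D \<in> F" "sh z x D \<notin> F" "C = sh z x D"
    then have "sh z x D \<noteq> D" by auto
    then have xD: "x \<in> D" "z \<notin> D" unfolding sh_def by (auto split: if_splits)
    then have CD: "C = insert z (D - {x})" using D unfolding sh_def by simp
    show ?thesis
    proof (cases "y = z")
      case True
      then have Bd: "B = D - {x}" using CD C xD by auto
      have "B \<in> shadow F" using shadow_mem[OF D(1) xD(1)] Bd by simp
      moreover have "sh z x B = B" using Bd unfolding sh_def by auto
      ultimately show ?thesis using SF_in1[of B "shadow F" z x] by simp
    next
      case False
      then have yD: "y \<in> D" "y \<noteq> x" using C CD by auto
      have DyF: "D - {y} \<in> shadow F" using shadow_mem[OF D(1) yD(1)] .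
      have Bsh: "B = sh z x (D - {y})" using C CD xD yD False unfolding sh_def by auto
      show ?thesis
      proof (cases "sh z x (D - {y}) \<in> shadow F")
        case True
        then have "B \<in> shadow F" using Bsh by simp
        moreover have "sh z x B = B" using Bsh xD unfolding sh_def by auto
        ultimately show ?thesis using SF_in1[of B "shadow F" z x] by simp
      next
        case False
        then show ?thesis using SF_in2[OF DyF False] Bsh by simp
      qed
    qed
  qed
qed

lemma sh_subs: "finite X \<Longrightarrow> z \<in> X \<Longrightarrow> A \<in> subs X q \<Longrightarrow> sh z x A \<in> subs X q"
proof -
  assume fX: "finite X" and z: "z \<in> X" and A: "A \<in> subs X q"
  then have fA: "finite A" by (auto dest: finite_subset)
  show ?thesis
  proof (cases "x \<in> A \<and> z \<notin> A")
    case True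
    have "card A > 0" using True fA card_gt_0_iff by blast
    then have "card (insert z (A - {x})) = card A" using True fA by (simp add: card.insert_remove)
    then show ?thesis using True A z unfolding sh_def by (auto simp: card_Diff_singleton)
  next
    case False then show ?thesis using A unfolding sh_def by auto
  qed
qed

lemma SF_subs: "finite X \<Longrightarrow> z \<in> X \<Longrightarrow> F \<subseteq> subs X q \<Longrightarrow> SF z x F \<subseteq> subs X q"
  unfolding SF_def using sh_subs[of X z] by blast

lemma shift_exists_gen:
  assumes fX: "finite X" and z: "z \<in> X" and F: "F \<subseteq> subs X q" and fY: "finite Y"
  shows "\<exists>F'. F' \<subseteq> subs X q \<and> card F' = card F \<and> card (shadow F') \<le> card (shadow F) \<and>
           (\<forall>A\<in>F'. \<forall>x\<in>Y. x \<in> A \<and> z \<notin> A \<longrightarrow> insert z (A - {x}) \<in> F')"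
  using fY
proof (induction Y rule: finite_induct)
  case empty
  show ?case by (intro exI[of _ F] conjI F) auto
next
  case (insert y Y)
  then obtain F' where F': "F' \<subseteq> subs X q" "card F' = card F" "card (shadow F') \<le> card (shadow F)"
    "\<forall>A\<in>F'. \<forall>x\<in>Y. x \<in> A \<and> z \<notin> A \<longrightarrow> insert z (A - {x}) \<in> F'" by blast
  define G where "G = SF z y F'"
  have fF': "finite F'" using finite_subs[OF fX F'(1)] .
  have G1: "G \<subseteq> subs X q" unfolding G_def using SF_subs[OF fX z F'(1)] .
  have G2: "card G = card F" unfolding G_def using SF_card[OF fF'] F' by simp
  have fsh: "finite (shadow F')" using finite_shadow_subs[OF fX F'(1)] .
  have fsh2: "finite (SF z y (shadow F'))" unfolding SF_img using fsh by (rule finite_imageI)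
  have "card (shadow G) \<le> card (SF z y (shadow F'))"
    unfolding G_def by (rule card_mono[OF fsh2 shadow_SF])
  also have "\<dots> = card (shadow F')" using SF_card[OF fsh] .
  finally have G3: "card (shadow G) \<le> card (shadow F)" using F' by simp
  have G4: "\<forall>A\<in>G. \<forall>x\<in>insert y Y. x \<in> A \<and> z \<notin> A \<longrightarrow> insert z (A - {x}) \<in> G"
  proof (intro ballI impI)
    fix A x assume A: "A \<in> G" and x: "x \<in> insert y Y" and xz: "x \<in> A \<and> z \<notin> A"
    have AF: "A \<in> F'" and shA: "sh z y A \<in> F'"
    proof -
      have "A \<in> F' \<and> sh z y A \<in> F'"
      using A unfolding G_def
      proof (rule SF_E)
        fix D assume D: "D \<in> F'" "sh z y D \<notin> F'" "A = sh z y D"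
        then have "sh z y D \<noteq> D" by auto
        then have "z \<in> sh z y D" unfolding sh_def by (auto split: if_splits)
        with D xz show ?thesis by simp
      qed simp
      then show "A \<in> F'" "sh z y A \<in> F'" by auto
    qed
    have "sh z y (insert z (A - {x})) = insert z (A - {x})" unfolding sh_def by auto
    then have keep: "insert z (A - {x}) \<in> F' \<Longrightarrow> insert z (A - {x}) \<in> G"
      unfolding G_def using SF_in1[of "insert z (A - {x})" F' z y] by simp
    show "insert z (A - {x}) \<in> G"
    proof (cases "x = y")
      case True
      then have "sh z y A = insert z (A - {x})" using xz unfolding sh_def by auto
      with shA keep show ?thesis by simp
    next
      case False
      then have "x \<in> Y" using x by simp
      then show ?thesis using keep F'(4) AF xz by simp
    qed
  qed
  show ?case by (intro exI[of _ G] conjI G1 G2 G3 G4)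
qed

lemma shift_exists:
  assumes fX: "finite X" and z: "z \<in> X" and F: "F \<subseteq> subs X q"
  shows "\<exists>F'. F' \<subseteq> subs X q \<and> card F' = card F \<and> card (shadow F') \<le> card (shadow F) \<and>
           (\<forall>A\<in>F'. \<forall>x. x \<in> A \<and> z \<notin> A \<longrightarrow> insert z (A - {x}) \<in> F')"
proof -
  obtain F' where F': "F' \<subseteq> subs X q" "card F' = card F" "card (shadow F') \<le> card (shadow F)"
    "\<forall>A\<in>F'. \<forall>x\<in>X. x \<in> A \<and> z \<notin> A \<longrightarrow> insert z (A - {x}) \<in> F'"
    using shift_exists_gen[OF fX z F fX] by blast
  moreover have "\<forall>A\<in>F'. \<forall>x. x \<in> A \<and> z \<notin> A \<longrightarrow> insert z (A - {x}) \<in> F'"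
    using F'(1,4) by blast
  ultimately show ?thesis by blast
qed


lemma decomp:
  assumes fX: "finite X" and z: "z \<in> X" and F: "F \<subseteq> subs X q"
    and shf: "\<forall>A\<in>F. \<forall>x. x \<in> A \<and> z \<notin> A \<longrightarrow> insert z (A - {x}) \<in> F"
  defines "F0 \<equiv> (\<lambda>A. A - {z}) ` {A\<in>F. z \<in> A}" and "F1 \<equiv> {A\<in>F. z \<notin> A}"
  shows "F0 \<subseteq> subs (X - {z}) (q-1)" "F1 \<subseteq> subs (X - {z}) q"
    "card F = card F0 + card F1" "shadow F1 \<subseteq> F0"
    "card F0 + card (shadow F0) \<le> card (shadow F)"
proof -
  have fF: "finite F" using finite_subs[OF fX F] .
  have finA: "\<And>A. A \<in> F \<Longrightarrow> finite A" using F fX by (auto dest: finite_subset)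
  show "F0 \<subseteq> subs (X - {z}) (q-1)" unfolding F0_def using F finA by auto
  show "F1 \<subseteq> subs (X - {z}) q" unfolding F1_def using F by auto
  have inj: "inj_on (\<lambda>A. A - {z}) {A\<in>F. z \<in> A}"
    by (rule inj_onI) (metis (mono_tags, lifting) insert_Diff mem_Collect_eq)
  have c0: "card F0 = card {A\<in>F. z \<in> A}" unfolding F0_def using card_image[OF inj] .
  have "F = {A\<in>F. z \<in> A} \<union> F1" unfolding F1_def by auto
  moreover have "{A\<in>F. z \<in> A} \<inter> F1 = {}" unfolding F1_def by auto
  ultimately have "card F = card {A\<in>F. z \<in> A} + card F1"
    using fF card_Un_disjoint[of "{A\<in>F. z \<in> A}" F1] unfolding F1_def
    by (metis (no_types, lifting) finite_Un)
  then show "card F = card F0 + card F1" using c0 by simp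
  show sh1: "shadow F1 \<subseteq> F0"
  proof
    fix B assume "B \<in> shadow F1"
    then obtain A x where A: "A \<in> F1" "x \<in> A" "B = A - {x}" by (rule shadow_memE)
    then have "insert z (A - {x}) \<in> F" using shf unfolding F1_def by auto
    moreover have "insert z (A - {x}) - {z} = B" using A unfolding F1_def by auto
    ultimately show "B \<in> F0" unfolding F0_def
      using image_eqI[of B "\<lambda>A. A - {z}" "insert z (A - {x})" "{A\<in>F. z \<in> A}"] by simp
  qed
  have F0sh: "F0 \<subseteq> shadow F" unfolding F0_def using shadow_mem by fastforce
  have I: "insert z ` shadow F0 \<subseteq> shadow F"
  proof
    fix C assume "C \<in> insert z ` shadow F0"
    then obtain B where B: "B \<in> shadow F0" "C = insert z B" by auto
    then obtain A' y where A': "A' \<in> F0" "y \<in> A'" "B = A' - {y}" by (meson shadow_memE)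
    then obtain A where A: "A \<in> F" "z \<in> A" "A' = A - {z}" unfolding F0_def by auto
    then have "C = A - {y}" using A' B by auto
    moreover have "y \<in> A" using A A' by auto
    ultimately show "C \<in> shadow F" using shadow_mem[OF A(1)] by simp
  qed
  have nz: "\<And>B. B \<in> shadow F0 \<Longrightarrow> z \<notin> B"
    by (erule shadow_memE) (auto simp: F0_def)
  have injz: "inj_on (insert z) (shadow F0)"
    by (rule inj_onI) (metis nz Diff_insert_absorb)
  have disj: "F0 \<inter> insert z ` shadow F0 = {}" unfolding F0_def by auto
  have fsh: "finite (shadow F)" using finite_shadow_subs[OF fX F] .
  have "card (F0 \<union> insert z ` shadow F0) \<le> card (shadow F)"
    using F0sh I fsh by (intro card_mono) auto
  moreover have "card (F0 \<union> insert z ` shadow F0) = card F0 + card (shadow F0)"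
  proof -
    have "finite F0" using F0sh fsh finite_subset by blast
    moreover have "finite (insert z ` shadow F0)" using I fsh finite_subset by blast
    ultimately have "card (F0 \<union> insert z ` shadow F0) = card F0 + card (insert z ` shadow F0)"
      using disj by (rule card_Un_disjoint)
    then show ?thesis using card_image[OF injz] by simp
  qed
  ultimately show "card F0 + card (shadow F0) \<le> card (shadow F)" by simp
qed

lemma cc_V_pos: "cc q (x#xs) \<Longrightarrow> 1 \<le> CV q (x#xs)"
proof -
  assume "cc q (x#xs)"
  then have "q \<le> x" by simp
  then have "0 < x choose q" by simp
  moreover have "x choose q \<le> CV q (x#xs)" by simp
  ultimately show ?thesis by linarith
qed

lemma KK:
  "finite X \<Longrightarrow> F \<subseteq> subs X q \<Longrightarrow> cc q a \<Longrightarrow> CV q a \<le> card F \<Longrightarrow> CV (q-1) a \<le> card (shadow F)"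
proof (induction "card X" arbitrary: X q F a rule: less_induct)
  case less
  note fX = less.prems(1) and FX = less.prems(2) and cca = less.prems(3) and Va = less.prems(4)
  show ?case
  proof (cases a)
    case Nil then show ?thesis by simp
  next
    case (Cons x xs)
    have q1: "1 \<le> q" using cca Cons by simp
    have "1 \<le> card F" using cc_V_pos[of q x xs] cca Cons Va by simp
    then obtain A where A: "A \<in> F" by (metis card.empty ex_in_conv not_one_le_zero)
    then have "A \<subseteq> X" "card A = q" using FX by auto
    then have "A \<noteq> {}" using q1 by auto
    then obtain z where z: "z \<in> X" using \<open>A \<subseteq> X\<close> by auto
    obtain F' where F': "F' \<subseteq> subs X q" "card F' = card F" "card (shadow F') \<le> card (shadow F)"
      "\<forall>A\<in>F'. \<forall>x. x \<in> A \<and> z \<notin> A \<longrightarrow> insert z (A - {x}) \<in> F'"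
      using shift_exists[OF fX z FX] by blast
    define F0 where "F0 = (\<lambda>A. A - {z}) ` {A\<in>F'. z \<in> A}"
    define F1 where "F1 = {A\<in>F'. z \<notin> A}"
    note D = decomp[OF fX z F'(1) F'(4), folded F0_def F1_def]
    define X' where "X' = X - {z}"
    have fX': "finite X'" unfolding X'_def using fX by simp
    have cX': "card X' < card X" unfolding X'_def using card_Diff1_less[OF fX z] .
    have fF0: "finite F0" using finite_subs[OF fX' D(1)[folded X'_def]] .
    have P1a: "CV q a = CV q (dec a) + CV (q-1) (dec a)" using P1[OF cca] .
    have F0big: "CV (q-1) (dec a) \<le> card F0"
    proof (rule ccontr)
      assume "\<not> CV (q-1) (dec a) \<le> card F0"
      then have lt: "card F0 < CV (q-1) (dec a)" by simp
      have "CV q (bb q a) \<le> card F1" using B2[OF cca] D(3) F'(2) Va P1a lt by linarith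
      then have "CV (q-1) (bb q a) \<le> card (shadow F1)"
        using less.hyps[OF cX'[unfolded X'_def] _ D(2) B1[OF cca]] fX' unfolding X'_def by blast
      also have "\<dots> \<le> card F0" using card_mono[OF fF0 D(4)] .
      finally show False using B3[OF cca] lt by linarith
    qed
    have "CV (q-1-1) (take (q-1) (dec a)) \<le> card (shadow F0)"
    proof -
      have "CV (q-1) (take (q-1) (dec a)) \<le> card F0" using P4 F0big le_trans by blast
      then show ?thesis
        using less.hyps[OF cX'[unfolded X'_def] _ D(1) P3[OF cca]] fX' unfolding X'_def by blast
    qed
    moreover have "CV (q-1) a = CV (q-1) (dec a) + CV (q-2) (take (q-1) (dec a))" using P2[OF cca q1] .
    ultimately have "CV (q-1) a \<le> card F0 + card (shadow F0)" using F0big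
      by (simp add: numeral_2_eq_2)
    also have "\<dots> \<le> card (shadow F')" using D(5) .
    also have "\<dots> \<le> card (shadow F)" using F'(3) .
    finally show ?thesis .
  qed
qed

lemma dualKK:
  assumes fX: "finite X" and K: "K \<subseteq> subs X k" and srt: "sorted_wrt (>) a" and len: "length a < k"
    and sh: "card (shadow K) \<le> CV (k-1) a"
  shows "card K \<le> CV k a"
proof (rule ccontr)
  assume "\<not> card K \<le> CV k a"
  then have "CV k (ext k a) \<le> card K" using E2[of k a] by linarith
  then have "CV (k-1) (ext k a) \<le> card (shadow K)" using KK[OF fX K E1[OF srt len]] by simp
  then show False using E3[OF srt len] sh by linarith
qed

lemma cliques_sub: "cliques W q G r \<subseteq> subs W r"
  unfolding cliques_def by auto

lemma shadow_cliques: "shadow (cliques W q G (Suc n)) \<subseteq> cliques W q G n"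
proof
  fix B assume "B \<in> shadow (cliques W q G (Suc n))"
  then obtain T x where T: "T \<in> cliques W q G (Suc n)" "x \<in> T" "B = T - {x}" by (rule shadow_memE)
  then have "finite T" unfolding cliques_def by (auto intro: card_ge_0_finite)
  then show "B \<in> cliques W q G n" using T unfolding cliques_def by auto
qed

lemma cliques_base: "cliques W q G q \<subseteq> G"
  unfolding cliques_def by auto

lemma cliques_int:
  assumes fW: "finite W" and fG: "finite G" and cca: "cc q a" and G: "card G \<le> CV q a" and qr: "q \<le> r"
  shows "card (cliques W q G r) \<le> CV r a"
  using qr
proof (induction r rule: dec_induct)
  case base
  show ?case using card_mono[OF fG cliques_base[of W q G]] G by (rule le_trans)
next
  case (step n)
  have fc: "finite (cliques W q G n)" using finite_subs[OF fW cliques_sub] .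
  have "card (shadow (cliques W q G (Suc n))) \<le> card (cliques W q G n)"
    using card_mono[OF fc shadow_cliques] .
  then have "card (shadow (cliques W q G (Suc n))) \<le> CV (Suc n - 1) a" using step by simp
  moreover have "length a < Suc n" using cc_len[OF cca] step by simp
  ultimately show ?case using dualKK[OF fW cliques_sub cc_sorted[OF cca]] by blast
qed


lemma gb_nonneg: "real k - 1 \<le> w \<Longrightarrow> 0 \<le> w gchoose k"
  unfolding gbinomial_altdef_of_nat by (rule prod_nonneg) auto

lemma gb_pos: "real k - 1 < w \<Longrightarrow> 0 < w gchoose k"
  unfolding gbinomial_altdef_of_nat by (rule prod_pos) auto

lemma gb_strict:
  assumes k: "1 \<le> k" and w: "real k - 1 < w" and ww: "w < w'"
  shows "w gchoose k < w' gchoose k"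
  unfolding gbinomial_altdef_of_nat
proof (rule prod_mono_strict[where i=0])
  show "0 \<in> {0..<k}" using k by simp
  show "(w - real 0) / real (k - 0) < (w' - real 0) / real (k - 0)" using k ww by (simp add: divide_strict_right_mono)
  show "finite {0..<k}" by simp
  fix i assume i: "i \<in> {0..<k}"
  then have "real i \<le> real k - 1" by auto
  then have p: "0 \<le> w - real i" "w - real i \<le> w' - real i" using w ww by auto
  have d: "0 < real (k - i)" using i by simp
  show "0 \<le> (w - real i) / real (k - i) \<and> (w - real i) / real (k - i) \<le> (w' - real i) / real (k - i)"
    using p d by (simp add: divide_right_mono)
  show "0 < (w' - real i) / real (k - i)" using p d w ww \<open>real i \<le> real k - 1\<close> by simp
qed

lemma gb_pascal: "(w::real) gchoose (Suc k) = ((w-1) gchoose k) + ((w-1) gchoose (Suc k))"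
  using gbinomial_Suc_Suc[of "w-1" k] by simp

lemma card_shadow_one:
  assumes fK: "finite (shadow K)" and A: "A \<in> K" and fA: "finite A"
  shows "card A \<le> card (shadow K)"
proof -
  have "inj_on (\<lambda>x. A - {x}) A"
  proof (rule inj_onI)
    fix x x' assume "x \<in> A" "x' \<in> A" "A - {x} = A - {x'}"
    show "x = x'"
    proof (rule ccontr)
      assume "x \<noteq> x'"
      then have "x \<in> A - {x'}" using \<open>x \<in> A\<close> by simp
      then have "x \<in> A - {x}" using \<open>A - {x} = A - {x'}\<close> by simp
      then show False by simp
    qed
  qed
  then have e: "card ((\<lambda>x. A - {x}) ` A) = card A" by (rule card_image)
  have "(\<lambda>x. A - {x}) ` A \<subseteq> shadow K"
  proof
    fix C assume "C \<in> (\<lambda>x. A - {x}) ` A"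
    then obtain x where "x \<in> A" "C = A - {x}" by auto
    then show "C \<in> shadow K" using shadow_mem[OF A] by simp
  qed
  from card_mono[OF fK this] e show ?thesis by simp
qed

lemma DR:
  "finite X \<Longrightarrow> K \<subseteq> subs X k \<Longrightarrow> 2 \<le> k \<Longrightarrow> real k \<le> y \<Longrightarrow>
   real (card (shadow K)) \<le> y gchoose (k-1) \<Longrightarrow> real (card K) \<le> y gchoose k"
proof (induction "card X" arbitrary: X k K y rule: less_induct)
  case less
  note fX = less.prems(1) and KX = less.prems(2) and k2 = less.prems(3) and ky = less.prems(4)
    and shK = less.prems(5)
  show ?case
  proof (cases "K = {}")
    case True
    then show ?thesis using gb_nonneg[of k y] ky by simp
  next
    case False
    then obtain A where A: "A \<in> K" by auto
    then have "A \<subseteq> X" "card A = k" using KX by auto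
    then have "A \<noteq> {}" using k2 by auto
    then obtain z where z: "z \<in> X" using \<open>A \<subseteq> X\<close> by auto
    obtain F' where F': "F' \<subseteq> subs X k" "card F' = card K" "card (shadow F') \<le> card (shadow K)"
      "\<forall>A\<in>F'. \<forall>x. x \<in> A \<and> z \<notin> A \<longrightarrow> insert z (A - {x}) \<in> F'"
      using shift_exists[OF fX z KX] by blast
    define F0 where "F0 = (\<lambda>A. A - {z}) ` {A\<in>F'. z \<in> A}"
    define F1 where "F1 = {A\<in>F'. z \<notin> A}"
    note D = decomp[OF fX z F'(1) F'(4), folded F0_def F1_def]
    define X' where "X' = X - {z}"
    have fX': "finite X'" unfolding X'_def using fX by simp
    have cX': "card X' < card X" unfolding X'_def using card_Diff1_less[OF fX z] .
    have D1: "F0 \<subseteq> subs X' (k-1)" using D(1) unfolding X'_def .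
    have D2: "F1 \<subseteq> subs X' k" using D(2) unfolding X'_def .
    have fF0: "finite F0" using finite_subs[OF fX' D1] .
    have fsh1: "finite (shadow F1)" using finite_shadow_subs[OF fX' D2] .
    have sum: "real (card F0) + real (card (shadow F0)) \<le> y gchoose (k-1)"
      using D(5) F'(3) shK by (smt (verit, ccfv_SIG) of_nat_add of_nat_le_iff)
    have cK: "real (card K) = real (card F0) + real (card F1)" using D(3) F'(2) by simp
    obtain m where m: "k = Suc m" "1 \<le> m" using k2 by (cases k) auto
    have pas1: "y gchoose k = ((y-1) gchoose m) + ((y-1) gchoose k)" using gb_pascal[of y m] m by simp
    have pas2: "y gchoose m = ((y-1) gchoose (m-1)) + ((y-1) gchoose m)"
      using gb_pascal[of y "m-1"] m by simp
    have sh1F0: "card (shadow F1) \<le> card F0" using card_mono[OF fF0 D(4)] .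
    show ?thesis
    proof (cases "real (card F0) \<le> (y-1) gchoose m")
      case c1: True
      show ?thesis
      proof (cases "real k \<le> y - 1")
        case True
        have "real (card F1) \<le> (y-1) gchoose k"
          using less.hyps[OF cX' fX' D2 k2 True] sh1F0 c1 m by simp
        then show ?thesis using cK c1 pas1 by simp
      next
        case False
        have "F1 = {}"
        proof (rule ccontr)
          assume "F1 \<noteq> {}"
          then obtain B where B: "B \<in> F1" by auto
          then have "card B = k" "finite B" using D2 fX' by (auto dest: finite_subset)
          then have "k \<le> card (shadow F1)" using card_shadow_one[OF fsh1 B] by simp
          then have "real k \<le> real (card F0)" using sh1F0 by simp
          moreover have "(y-1) gchoose m < real k gchoose m"
            using gb_strict[of m "y-1" "real k"] m ky False by simp
          moreover have "real k gchoose m = real k"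
          proof -
            have "real k gchoose m = real (k choose m)" by (simp add: binomial_gbinomial)
            also have "k choose m = k" using choose_pred[of k] m by simp
            finally show ?thesis by simp
          qed
          ultimately show False using c1 by simp
        qed
        then have "real (card K) = real (card F0)" using cK by simp
        moreover have "0 \<le> (y-1) gchoose k" using gb_nonneg[of k "y-1"] ky by simp
        ultimately show ?thesis using c1 pas1 by simp
      qed
    next
      case c2: False
      have lt: "real (card (shadow F0)) < (y-1) gchoose (m-1)" using sum pas2 c2 m by simp
      show ?thesis
      proof (cases "k = 2")
        case True
        then have "m = 1" using m by simp
        then have "card (shadow F0) = 0" using lt by simp
        moreover have "finite (shadow F0)" using finite_shadow_subs[OF fX' D1] .
        ultimately have "shadow F0 = {}" by simp
        have "F0 = {}"
        proof (rule ccontr)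
          assume "F0 \<noteq> {}"
          then obtain B where B: "B \<in> F0" by auto
          then have "card B = 1" using D1 True by auto
          then obtain b where "B = {b}" using card_1_singletonE by blast
          then have "{} \<in> shadow F0" using shadow_mem[OF B] by simp
          with \<open>shadow F0 = {}\<close> show False by simp
        qed
        moreover have "0 \<le> (y-1) gchoose m" using gb_nonneg[of m "y-1"] ky m by simp
        ultimately show ?thesis using c2 by simp
      next
        case False
        then have k3: "2 \<le> k - 1" using k2 by simp
        have "real (card F0) \<le> (y-1) gchoose (k-1)"
          using less.hyps[OF cX' fX' D1 k3, of "y-1"] ky lt m by simp
        then show ?thesis using c2 m by simp
      qed
    qed
  qed
qed

lemma cliques_real:
  assumes fW: "finite W" and fG: "finite G" and q1: "1 \<le> q" and qr: "q \<le> r" and ry: "real r \<le> y"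
    and G: "real (card G) \<le> y gchoose q"
  shows "real (card (cliques W q G r)) \<le> y gchoose r"
  using qr ry
proof (induction r rule: dec_induct)
  case base
  have "card (cliques W q G q) \<le> card G" using card_mono[OF fG cliques_base[of W q G]] .
  then show ?case using G by linarith
next
  case (step n)
  have fc: "finite (cliques W q G n)" using finite_subs[OF fW cliques_sub] .
  have "card (shadow (cliques W q G (Suc n))) \<le> card (cliques W q G n)"
    using card_mono[OF fc shadow_cliques] .
  moreover have "real (card (cliques W q G n)) \<le> y gchoose n" using step by simp
  ultimately have "real (card (shadow (cliques W q G (Suc n)))) \<le> y gchoose (Suc n - 1)" by simp
  moreover have "2 \<le> Suc n" using step q1 by simp
  ultimately show ?case using DR[OF fW cliques_sub] step by blast
qed


lemma cc_of_strict: "strict_cascade q ns \<Longrightarrow> cc q ns"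
proof (induction ns arbitrary: q)
  case Nil then show ?case by simp
next
  case (Cons x xs)
  have L: "length (x#xs) \<le> q" and S: "sorted_wrt (>) (x#xs)" and B: "\<forall>k<length (x#xs). (x#xs)!k \<ge> q - k"
    using Cons.prems unfolding strict_cascade_def by auto
  have "0 < q" using L by simp
  moreover have "q \<le> x" using B by (metis length_greater_0_conv list.discI nth_Cons_0 minus_nat.diff_0)
  moreover have "\<forall>y\<in>set xs. y < x" using S by simp
  moreover have "strict_cascade (q-1) xs"
    unfolding strict_cascade_def
  proof (intro conjI allI impI)
    show "length xs \<le> q - 1" using L by simp
    show "sorted_wrt (>) xs" using S by simp
    fix k assume "k < length xs"
    then have "(x#xs)!(Suc k) \<ge> q - Suc k" using B by (metis Suc_less_eq length_Cons)
    then show "xs!k \<ge> q - 1 - k" by simp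
  qed
  ultimately show ?case using Cons.IH by simp
qed

lemma V_sum: "CV k ns = (\<Sum>j<length ns. ns!j choose (k - j))"
proof (induction ns arbitrary: k)
  case Nil then show ?case by simp
next
  case (Cons x xs)
  have "CV k (x#xs) = (x choose k) + (\<Sum>j<length xs. xs!j choose (k - 1 - j))" using Cons.IH[of "k-1"] by simp
  also have "\<dots> = (\<Sum>j<length (x#xs). (x#xs)!j choose (k - j))"
    unfolding length_Cons sum.lessThan_Suc_shift by simp
  finally show ?case .
qed

definition lk :: "'a set set \<Rightarrow> 'a set \<Rightarrow> 'a set set" where
  "lk H I = (\<lambda>e. e - I) ` {e \<in> H. I \<subseteq> e}"

lemma deg_le_max:
  assumes fV: "finite V" and I: "I \<subseteq> V" "card I = i"
  shows "deg H I \<le> max_deg V H i"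
proof -
  have "{deg H I | I. I \<subseteq> V \<and> card I = i} = (deg H) ` {I. I \<subseteq> V \<and> card I = i}" by auto
  then have fin: "finite (insert 0 {deg H I | I. I \<subseteq> V \<and> card I = i})" using fV by simp
  have "deg H I \<in> insert 0 {deg H I | I. I \<subseteq> V \<and> card I = i}" using I by auto
  then show ?thesis unfolding max_deg_def using Max_ge[OF fin] by blast
qed

lemma link_props:
  assumes fV: "finite V" and H: "\<forall>e\<in>H. e \<subseteq> V \<and> card e = s" and I: "I \<subseteq> V" "card I = i" and iS: "i \<le> s"
  shows "lk H I \<subseteq> subs V (s-i)" "finite (lk H I)" "card (lk H I) \<le> deg H I"
    "card {T \<in> cliques V s H t. I \<subseteq> T} \<le> card (cliques V (s-i) (lk H I) (t-i))"
proof -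
  have fI: "finite I" using I fV finite_subset by blast
  show sub: "lk H I \<subseteq> subs V (s-i)"
  proof
    fix B assume "B \<in> lk H I"
    then obtain e where e: "e \<in> H" "I \<subseteq> e" "B = e - I" unfolding lk_def by auto
    then have "card B = s - i" using H I fI by (simp add: card_Diff_subset)
    then show "B \<in> subs V (s-i)" using e H by auto
  qed
  show fin: "finite (lk H I)" using finite_subs[OF fV sub] .
  have fH: "finite {e \<in> H. I \<subseteq> e}"
    using finite_subs[of V "{e \<in> H. I \<subseteq> e}" s] fV H by blast
  show "card (lk H I) \<le> deg H I" unfolding lk_def deg_def using card_image_le[OF fH] .
  have inj: "inj_on (\<lambda>T. T - I) {T \<in> cliques V s H t. I \<subseteq> T}"
    by (rule inj_onI) (metis (no_types, lifting) Diff_partition mem_Collect_eq)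
  have into: "(\<lambda>T. T - I) ` {T \<in> cliques V s H t. I \<subseteq> T} \<subseteq> cliques V (s-i) (lk H I) (t-i)"
  proof
    fix B assume "B \<in> (\<lambda>T. T - I) ` {T \<in> cliques V s H t. I \<subseteq> T}"
    then obtain T where T: "T \<in> cliques V s H t" "I \<subseteq> T" "B = T - I" by auto
    then have TV: "T \<subseteq> V" "card T = t" and Tcl: "\<And>S. S \<subseteq> T \<Longrightarrow> card S = s \<Longrightarrow> S \<in> H"
      unfolding cliques_def by auto
    have fT: "finite T" using TV fV finite_subset by blast
    have "B \<subseteq> V" using T TV by auto
    moreover have "card B = t - i" using T TV I fI by (simp add: card_Diff_subset)
    moreover have "\<forall>S. S \<subseteq> B \<and> card S = s - i \<longrightarrow> S \<in> lk H I"
    proof (intro allI impI)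
      fix S assume S: "S \<subseteq> B \<and> card S = s - i"
      have fS: "finite S" using S T fT finite_subset by blast
      have disj: "S \<inter> I = {}" using S T by auto
      have "card (S \<union> I) = card S + card I" using card_Un_disjoint[OF fS fI disj] .
      then have cSI: "card (S \<union> I) = s" using S I iS by simp
      have "S \<union> I \<subseteq> T" using S T by auto
      then have "S \<union> I \<in> H" using Tcl cSI by blast
      moreover have "(S \<union> I) - I = S" using disj by auto
      ultimately show "S \<in> lk H I" unfolding lk_def
        using image_eqI[of S "\<lambda>e. e - I" "S \<union> I" "{e \<in> H. I \<subseteq> e}"] by auto
    qed
    ultimately show "B \<in> cliques V (s-i) (lk H I) (t-i)" unfolding cliques_def by auto
  qed
  have fc: "finite (cliques V (s-i) (lk H I) (t-i))" using finite_subs[OF fV cliques_sub] .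
  show "card {T \<in> cliques V s H t. I \<subseteq> T} \<le> card (cliques V (s-i) (lk H I) (t-i))"
    using card_mono[OF fc into] card_image[OF inj] by simp
qed


lemma double_count:
  assumes fV: "finite V" and K: "K \<subseteq> subs V t"
  shows "card K * (t choose i) = (\<Sum>I\<in>subs V i. card {T\<in>K. I \<subseteq> T})"
proof -
  have fK: "finite K" using finite_subs[OF fV K] .
  have fI: "finite (subs V i)" using fV by simp
  have "(\<Sum>I\<in>subs V i. card {T\<in>K. I \<subseteq> T}) = (\<Sum>I\<in>subs V i. \<Sum>T\<in>K. if I \<subseteq> T then 1 else 0)"
  proof (rule sum.cong[OF refl])
    fix I
    have "card {T\<in>K. I \<subseteq> T} = (\<Sum>T\<in>{T\<in>K. I \<subseteq> T}. 1)" by simp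
    also have "\<dots> = (\<Sum>T\<in>K. if I \<subseteq> T then 1 else 0)" by (rule sum.inter_filter[OF fK])
    finally show "card {T\<in>K. I \<subseteq> T} = (\<Sum>T\<in>K. if I \<subseteq> T then 1 else 0)" .
  qed
  also have "\<dots> = (\<Sum>T\<in>K. \<Sum>I\<in>subs V i. if I \<subseteq> T then 1 else 0)" by (rule sum.swap)
  also have "\<dots> = (\<Sum>T\<in>K. t choose i)"
  proof (rule sum.cong[OF refl])
    fix T assume T: "T \<in> K"
    then have TV: "T \<subseteq> V" "card T = t" using K by auto
    have fT: "finite T" using TV fV finite_subset by blast
    have "(\<Sum>I\<in>subs V i. if I \<subseteq> T then 1 else 0) = (\<Sum>I\<in>{I \<in> subs V i. I \<subseteq> T}. 1::nat)"
      using sum.inter_filter[OF fI, of "\<lambda>_. 1::nat" "\<lambda>I. I \<subseteq> T"] by simp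
    also have "\<dots> = card {I \<in> subs V i. I \<subseteq> T}" by simp
    also have "{I \<in> subs V i. I \<subseteq> T} = {I. I \<subseteq> T \<and> card I = i}" using TV by auto
    also have "card \<dots> = t choose i" using n_subsets[OF fT] TV by simp
    finally show "(\<Sum>I\<in>subs V i. if I \<subseteq> T then 1 else 0) = t choose i" .
  qed
  also have "\<dots> = card K * (t choose i)" by simp
  finally show ?thesis by simp
qed

theorem mainTheorem4:
  fixes V :: "'a set" and H :: "'a set set" and n s i t :: nat
  assumes "is_sgraph V s H" and "card V = n"
    and "1 \<le> i" and "i < s" and "s \<le> t"
  shows
    "(\<forall>(\<Delta>::nat) ns. max_deg V H i \<le> \<Delta> \<and> strict_cascade (s - i) ns
        \<and> \<Delta> = cascade_value (s - i) ns \<longrightarrow>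
        real (num_cliques V s H t) \<le> real (n choose i) * (1 / real (t choose i)) *
          (\<Sum>k < length ns. real ((ns ! k) choose (t - i - k))))
     \<and> (\<forall>x::real. x \<ge> real s \<and> real (max_deg V H i) \<le> (x - real i) gchoose (s - i) \<longrightarrow>
        (x < real t \<longrightarrow> num_cliques V s H t = 0) \<and>
        (x \<ge> real t \<longrightarrow>
           real (num_cliques V s H t) \<le> real (n choose i) * ((x - real i) gchoose (t - i)) / real (t choose i)
         \<and> real (n choose i) * ((x - real i) gchoose (t - i)) / real (t choose i)
             = real (n choose i) * (x gchoose t) / (x gchoose i)))"
proof -
  have fV: "finite V" and Hs: "\<forall>e\<in>H. e \<subseteq> V \<and> card e = s"
    using assms(1) unfolding is_sgraph_def by auto
  define K where "K = cliques V s H t"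
  have KV: "K \<subseteq> subs V t" unfolding K_def by (rule cliques_sub)
  have DC: "card K * (t choose i) = (\<Sum>I\<in>subs V i. card {T\<in>K. I \<subseteq> T})"
    using double_count[OF fV KV] .
  have cI: "card (subs V i) = n choose i" using n_subsets[OF fV] assms(2) by simp
  have tpos: "0 < t choose i" using assms by simp
  have nc: "num_cliques V s H t = card K" unfolding num_cliques_def K_def ..
  have iS: "i \<le> s" using assms by simp
  note LP = link_props[OF fV Hs _ _ iS]
  have part_a: "\<forall>(\<Delta>::nat) ns. max_deg V H i \<le> \<Delta> \<and> strict_cascade (s - i) ns
        \<and> \<Delta> = cascade_value (s - i) ns \<longrightarrow>
        real (num_cliques V s H t) \<le> real (n choose i) * (1 / real (t choose i)) *
          (\<Sum>k < length ns. real ((ns ! k) choose (t - i - k)))"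
  proof (intro allI impI)
    fix \<Delta> :: nat and ns assume h: "max_deg V H i \<le> \<Delta> \<and> strict_cascade (s - i) ns \<and> \<Delta> = cascade_value (s - i) ns"
    have cca: "cc (s-i) ns" using cc_of_strict h by blast
    have DV: "\<Delta> = CV (s-i) ns" using h V_sum unfolding cascade_value_def by simp
    have each: "\<And>I. I \<in> subs V i \<Longrightarrow> card {T\<in>K. I \<subseteq> T} \<le> CV (t-i) ns"
    proof -
      fix I assume I: "I \<in> subs V i"
      then have I1: "I \<subseteq> V" "card I = i" by auto
      have "card (lk H I) \<le> CV (s-i) ns"
        using LP(3)[OF I1] deg_le_max[OF fV I1, of H] h DV by linarith
      then have "card (cliques V (s-i) (lk H I) (t-i)) \<le> CV (t-i) ns"
        using cliques_int[OF fV LP(2)[OF I1] cca] assms by simp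
      then show "card {T\<in>K. I \<subseteq> T} \<le> CV (t-i) ns" using LP(4)[OF I1, of t] unfolding K_def by linarith
    qed
    have "card K * (t choose i) \<le> (n choose i) * CV (t-i) ns"
      using DC sum_bounded_above[of "subs V i" "\<lambda>I. card {T\<in>K. I \<subseteq> T}" "CV (t-i) ns", OF each] cI
      by simp
    then have "real (card K) * real (t choose i) \<le> real (n choose i) * real (CV (t-i) ns)"
      by (metis of_nat_le_iff of_nat_mult)
    then have "real (card K) \<le> real (n choose i) * real (CV (t-i) ns) / real (t choose i)"
      using tpos by (simp add: pos_le_divide_eq)
    moreover have "real (CV (t-i) ns) = (\<Sum>k < length ns. real ((ns ! k) choose (t - i - k)))"
      using V_sum by simp
    ultimately show "real (num_cliques V s H t) \<le> real (n choose i) * (1 / real (t choose i)) *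
          (\<Sum>k < length ns. real ((ns ! k) choose (t - i - k)))" using nc by simp
  qed
  have part_b: "\<forall>x::real. x \<ge> real s \<and> real (max_deg V H i) \<le> (x - real i) gchoose (s - i) \<longrightarrow>
        (x < real t \<longrightarrow> num_cliques V s H t = 0) \<and>
        (x \<ge> real t \<longrightarrow>
           real (num_cliques V s H t) \<le> real (n choose i) * ((x - real i) gchoose (t - i)) / real (t choose i)
         \<and> real (n choose i) * ((x - real i) gchoose (t - i)) / real (t choose i)
             = real (n choose i) * (x gchoose t) / (x gchoose i))"
  proof (intro allI impI conjI)
    fix x :: real assume h: "x \<ge> real s \<and> real (max_deg V H i) \<le> (x - real i) gchoose (s - i)"
    show "x < real t \<Longrightarrow> num_cliques V s H t = 0"
    proof (rule ccontr)
      assume xt: "x < real t" and ne: "num_cliques V s H t \<noteq> 0"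
      then have "K \<noteq> {}" using nc by auto
      then obtain T where T: "T \<in> K" by auto
      then have TV: "T \<subseteq> V" "card T = t" and Tcl: "\<And>S. S \<subseteq> T \<Longrightarrow> card S = s \<Longrightarrow> S \<in> H"
        unfolding K_def cliques_def by auto
      have fT: "finite T" using TV fV finite_subset by blast
      have "i \<le> card T" using TV assms by simp
      then obtain I where I: "I \<subseteq> T" "card I = i" "finite I" by (rule obtain_subset_with_card_n)
      have I1: "I \<subseteq> V" using I TV by auto
      have inj: "inj_on (\<lambda>S. S \<union> I) (subs (T - I) (s-i))"
      proof (rule inj_onI)
        fix S1 S2 assume "S1 \<in> subs (T - I) (s-i)" "S2 \<in> subs (T - I) (s-i)" "S1 \<union> I = S2 \<union> I"
        then have "(S1 \<union> I) - I = S1" "(S2 \<union> I) - I = S2" by auto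
        then show "S1 = S2" using \<open>S1 \<union> I = S2 \<union> I\<close> by metis
      qed
      have into: "(\<lambda>S. S \<union> I) ` subs (T - I) (s-i) \<subseteq> {e \<in> H. I \<subseteq> e}"
      proof
        fix E assume "E \<in> (\<lambda>S. S \<union> I) ` subs (T - I) (s-i)"
        then obtain S where S: "S \<subseteq> T - I" "card S = s - i" "E = S \<union> I" by auto
        have fS: "finite S" using S fT finite_subset by blast
        have "card E = s" using S card_Un_disjoint[OF fS I(3)] I iS by auto
        moreover have "E \<subseteq> T" using S I by auto
        ultimately show "E \<in> {e \<in> H. I \<subseteq> e}" using Tcl S by auto
      qed
      have fH: "finite {e \<in> H. I \<subseteq> e}"
        using finite_subs[of V "{e \<in> H. I \<subseteq> e}" s] fV Hs by blast
      have "card (subs (T - I) (s-i)) = (t - i) choose (s - i)"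
        using n_subsets[of "T - I" "s-i"] fT I TV by (simp add: card_Diff_subset)
      then have "(t - i) choose (s - i) \<le> deg H I"
        unfolding deg_def using card_mono[OF fH into] card_image[OF inj] by simp
      then have "real ((t - i) choose (s - i)) \<le> (x - real i) gchoose (s - i)"
        using deg_le_max[OF fV I1 I(2), of H] h by (meson of_nat_le_iff order.trans)
      moreover have "(x - real i) gchoose (s - i) < real (t - i) gchoose (s - i)"
        using gb_strict[of "s-i" "x - real i" "real (t-i)"] assms h xt by auto
      ultimately show False by (simp add: binomial_gbinomial)
    qed
    assume xt: "x \<ge> real t"
    have each: "\<And>I. I \<in> subs V i \<Longrightarrow> real (card {T\<in>K. I \<subseteq> T}) \<le> (x - real i) gchoose (t - i)"
    proof -
      fix I assume I: "I \<in> subs V i"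
      then have I1: "I \<subseteq> V" "card I = i" by auto
      have "card (lk H I) \<le> max_deg V H i" using LP(3)[OF I1] deg_le_max[OF fV I1, of H] by linarith
      then have "real (card (lk H I)) \<le> real (max_deg V H i)" by simp
      then have "real (card (lk H I)) \<le> (x - real i) gchoose (s-i)" using h by linarith
      then have "real (card (cliques V (s-i) (lk H I) (t-i))) \<le> (x - real i) gchoose (t-i)"
        using cliques_real[OF fV LP(2)[OF I1], of "s-i" "t-i" "x - real i"] assms xt by simp
      moreover have "real (card {T\<in>K. I \<subseteq> T}) \<le> real (card (cliques V (s-i) (lk H I) (t-i)))"
        using LP(4)[OF I1, of t] unfolding K_def by simp
      ultimately show "real (card {T\<in>K. I \<subseteq> T}) \<le> (x - real i) gchoose (t-i)" by linarith
    qed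
    have "real (card K * (t choose i)) = (\<Sum>I\<in>subs V i. real (card {T\<in>K. I \<subseteq> T}))"
      by (simp only: DC of_nat_sum)
    also have "\<dots> \<le> real (card (subs V i)) * ((x - real i) gchoose (t - i))"
      by (rule sum_bounded_above) (rule each)
    finally have "real (card K) * real (t choose i) \<le> real (n choose i) * ((x - real i) gchoose (t - i))"
      using cI by simp
    then show "real (num_cliques V s H t) \<le> real (n choose i) * ((x - real i) gchoose (t - i)) / real (t choose i)"
      using tpos nc by (simp add: pos_le_divide_eq)
    have tri: "(x gchoose t) * (real t gchoose i) = (x gchoose i) * ((x - real i) gchoose (t - i))"
      using gbinomial_trinomial_revision[of i t x] assms by simp
    have xi: "0 < x gchoose i" using gb_pos[of i x] assms xt by simp
    have ti: "real t gchoose i = real (t choose i)" by (simp add: binomial_gbinomial)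
    show "real (n choose i) * ((x - real i) gchoose (t - i)) / real (t choose i)
             = real (n choose i) * (x gchoose t) / (x gchoose i)"
    proof -
      have e: "((x - real i) gchoose (t - i)) / real (t choose i) = (x gchoose t) / (x gchoose i)"
        using tri xi tpos ti by (simp add: divide_simps)
      have "real (n choose i) * ((x - real i) gchoose (t - i)) / real (t choose i)
          = real (n choose i) * (((x - real i) gchoose (t - i)) / real (t choose i))" by simp
      also have "\<dots> = real (n choose i) * ((x gchoose t) / (x gchoose i))" by (simp only: e)
      also have "\<dots> = real (n choose i) * (x gchoose t) / (x gchoose i)" by simp
      finally show ?thesis .
    qed
  qed
  show ?thesis by (rule conjI[OF part_a part_b])
qed

end
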